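(* Let $q\neq-1$ be real and $n\ge0$. Then $$T_{2n+1}(x,s,q)=\sum_{k=0}^{n}\begin{bmatrix} 2n+1\\ 2k\end{bmatrix}(-1)^{n-k}\,t_{2n-2k+1}(q)\,x^{2n+1-2k}\,T_{2k}(x,s,q).$$
   Context: $T_0=1$, $T_1=x$, $T_n(x,s,q)=(1+q^{n-1})x\,T_{n-1}(x,s,q)+q^{n-1}s\,T_{n-2}(x,s,q)$ for $n\ge2$. Notation: $[m]=1+q+\cdots+q^{m-1}$, $[m]!=[1]\cdots[m]$, $\begin{bmatrix} m\\ j\end{bmatrix}=\frac{[m]!}{[j]![m-j]!}$. The $q$-exponential is the formal power series $e(z)=\sum_{m\ge0}z^m/[m]!$, and the $q$-tangent numbers $t_{2m+1}(q)$ are defined by the formal power series identity $\frac{e(z)-e(-z)}{e(z)+e(-z)}=\sum_{m\ge0}\frac{(-1)^m t_{2m+1}(q)}{[2m+1]!}z^{2m+1}$. *)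

theory Defs
  imports Complex_Main "HOL-Computational_Algebra.Formal_Power_Series"
begin

fun T :: "nat \<Rightarrow> real \<Rightarrow> real \<Rightarrow> real \<Rightarrow> real" where
  "T 0 x s q = 1"
| "T (Suc 0) x s q = x"
| "T (Suc (Suc n)) x s q =
     (1 + q ^ (Suc n)) * x * T (Suc n) x s q + q ^ (Suc n) * s * T n x s q"

definition qint :: "real \<Rightarrow> nat \<Rightarrow> real" where
  "qint q m = (\<Sum>i<m. q ^ i)"

definition qfact :: "real \<Rightarrow> nat \<Rightarrow> real" where
  "qfact q m = (\<Prod>i=1..m. qint q i)"

definition qbinom :: "real \<Rightarrow> nat \<Rightarrow> nat \<Rightarrow> real" where
  "qbinom q m j = qfact q m / (qfact q j * qfact q (m - j))"

text \<open>The formal power series e(c z) = sum_m c^m z^m / [m]! ; e(z) is c = 1, e(-z) is c = -1.\<close>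
definition qexp_fps :: "real \<Rightarrow> real \<Rightarrow> real fps" where
  "qexp_fps q c = Abs_fps (\<lambda>m. c ^ m / qfact q m)"

definition qtan_fps :: "real \<Rightarrow> real fps" where
  "qtan_fps q = (qexp_fps q 1 - qexp_fps q (-1)) / (qexp_fps q 1 + qexp_fps q (-1))"

text \<open>q-tangent numbers: t_{2m+1}(q) is determined by the coefficient of z^(2m+1),
  which equals (-1)^m t_{2m+1}(q) / [2m+1]!.  Only meaningful for odd index.\<close>
definition qtan :: "real \<Rightarrow> nat \<Rightarrow> real" where
  "qtan q j = (-1) ^ ((j - 1) div 2) * qfact q j * fps_nth (qtan_fps q) j"

end

theory Submission
  imports Defs
begin
unbundle fps_syntax

lemma qint_Suc: "qint q (Suc m) = qint q m + q ^ m"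
  by (simp add: qint_def)

lemma qfact_Suc: "qfact q (Suc m) = qfact q m * qint q (Suc m)"
  by (simp add: qfact_def)

lemma qint_geom: "(1 - q) * qint q m = 1 - q ^ m"
proof (induction m)
  case 0 then show ?case by (simp add: qint_def)
next
  case (Suc m)
  have "(1 - q) * qint q (Suc m) = (1 - q) * qint q m + (1 - q) * q ^ m"
    by (simp add: qint_Suc algebra_simps)
  also have "\<dots> = 1 - q ^ Suc m" using Suc by (simp add: algebra_simps)
  finally show ?case .
qed

lemma qint_nz: assumes "q \<noteq> -1" "m \<ge> 1" shows "qint q m \<noteq> 0"
proof
  assume z: "qint q m = 0"
  show False
  proof (cases "q = 1")
    case True
    then show False using z assms by (simp add: qint_def)
  next
    case False
    have "1 - q ^ m = 0" using qint_geom[of q m] z by simp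
    hence "q ^ m = 1" by simp
    hence "\<bar>q\<bar> = 1" using power_eq_1_iff[of q m] assms by auto
    then show False using False assms by (auto simp: abs_if split: if_splits)
  qed
qed

lemma qfact_nz: assumes "q \<noteq> -1" shows "qfact q m \<noteq> 0"
  using qint_nz[OF assms] by (simp add: qfact_def)

lemma qint_add: "qint q (i + m) = qint q i + q ^ i * qint q m"
  by (induction m) (simp_all add: qint_def algebra_simps power_add)

definition qD :: "real \<Rightarrow> real fps \<Rightarrow> real fps" where
  "qD q f = Abs_fps (\<lambda>n. qint q (Suc n) * f $ Suc n)"
definition qS :: "real \<Rightarrow> real fps \<Rightarrow> real fps" where
  "qS q f = Abs_fps (\<lambda>n. q ^ n * f $ n)"

lemma qD_nth[simp]: "qD q f $ n = qint q (Suc n) * f $ Suc n" by (simp add: qD_def)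
lemma qS_nth[simp]: "qS q f $ n = q ^ n * f $ n" by (simp add: qS_def)

lemma qS_mult: "qS q (f * g) = qS q f * qS q g"
  by (rule fps_ext) (simp add: fps_mult_nth sum_distrib_left algebra_simps power_add[symmetric])

lemma qS_add: "qS q (f + g) = qS q f + qS q g" by (rule fps_ext) (simp add: algebra_simps)
lemma qD_add: "qD q (f + g) = qD q f + qD q g" by (rule fps_ext) (simp add: algebra_simps)
lemma qS_const: "qS q (fps_const c * f) = fps_const c * qS q f" by (rule fps_ext) simp
lemma qD_const: "qD q (fps_const c * f) = fps_const c * qD q f" by (rule fps_ext) simp

lemma qDS: "qD q (qS q f) = fps_const q * qS q (qD q f)"
  by (rule fps_ext) simp

lemma qD_X: "fps_const (1 - q) * fps_X * qD q f = f - qS q f"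
proof (rule fps_ext)
  fix n show "(fps_const (1 - q) * fps_X * qD q f) $ n = (f - qS q f) $ n"
  proof (cases n)
    case (Suc m)
    have h: "(qint q (Suc m) + q * q ^ m) * f $ Suc m = (1 + q * qint q (Suc m)) * f $ Suc m"
      using qint_geom[of q "Suc m"] by (simp add: algebra_simps)
    show ?thesis using h Suc by (simp add: mult.assoc algebra_simps)
  qed simp
qed

lemma qD_mult: "qD q (f * g) = qD q f * g + qS q f * qD q g"
proof (rule fps_ext)
  fix n
  let ?h1 = "\<lambda>i. qint q i * (f $ i * g $ (Suc n - i))"
  let ?h2 = "\<lambda>i. q ^ i * qint q (Suc n - i) * (f $ i * g $ (Suc n - i))"
  have "qD q (f * g) $ n = (\<Sum>i=0..Suc n. qint q (Suc n) * (f $ i * g $ (Suc n - i)))"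
    by (simp only: qD_nth fps_mult_nth sum_distrib_left)
  also have "\<dots> = (\<Sum>i=0..Suc n. ?h1 i + ?h2 i)"
  proof (rule sum.cong[OF refl])
    fix i assume "i \<in> {0..Suc n}"
    hence "qint q (Suc n) = qint q (i + (Suc n - i))" by simp
    thus "qint q (Suc n) * (f $ i * g $ (Suc n - i)) = ?h1 i + ?h2 i"
      by (simp add: qint_add algebra_simps)
  qed
  also have "\<dots> = sum ?h1 {0..Suc n} + sum ?h2 {0..Suc n}" by (rule sum.distrib)
  also have "sum ?h1 {0..Suc n} = (qD q f * g) $ n"
  proof -
    have "sum ?h1 {0..Suc n} = ?h1 0 + (\<Sum>i=0..n. ?h1 (Suc i))"
      by (simp only: sum.atLeast0_atMost_Suc_shift o_def)
    also have "?h1 0 = 0" by (simp add: qint_def)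
    also have "(\<Sum>i=0..n. ?h1 (Suc i)) = (\<Sum>i=0..n. qD q f $ i * g $ (n - i))"
      by (rule sum.cong) auto
    finally show ?thesis by (simp add: fps_mult_nth)
  qed
  also have "sum ?h2 {0..Suc n} = (qS q f * qD q g) $ n"
  proof -
    have "sum ?h2 {0..Suc n} = (\<Sum>i=0..n. ?h2 i) + ?h2 (Suc n)"
      by (simp only: sum.atLeast0_atMost_Suc)
    also have "?h2 (Suc n) = 0" by (simp add: qint_def)
    also have "(\<Sum>i=0..n. ?h2 i) = (\<Sum>i=0..n. qS q f $ i * qD q g $ (n - i))"
      by (rule sum.cong) (auto simp: Suc_diff_le)
    finally show ?thesis by (simp only: fps_mult_nth add_0_right)
  qed
  finally show "qD q (f * g) $ n = (qD q f * g + qS q f * qD q g) $ n" by simp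
qed

lemma qD_mult': "qD q (f * g) = qD q f * qS q g + f * qD q g"
  using qD_mult[of q g f] by (simp add: algebra_simps)

definition Einv :: "real \<Rightarrow> real \<Rightarrow> real fps" where
  "Einv q x = Abs_fps (\<lambda>n. (\<Prod>i<n. q ^ i) * x ^ n / qfact q n)"

definition PP :: "real \<Rightarrow> real \<Rightarrow> real \<Rightarrow> nat \<Rightarrow> real" where
  "PP q x s j = (\<Prod>i<j. x ^ 2 + q ^ (2 * i + 1) * s)"

definition HH :: "real \<Rightarrow> real \<Rightarrow> real \<Rightarrow> real fps" where
  "HH q x s = Abs_fps (\<lambda>n. if even n then PP q x s (n div 2) / qfact q n else 0)"

lemma qD_Einv: assumes "q \<noteq> -1" shows "qD q (Einv q x) = fps_const x * qS q (Einv q x)"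
proof (rule fps_ext)
  fix n
  have "qint q (Suc n) \<noteq> 0" "qfact q n \<noteq> 0" using qint_nz[OF assms] qfact_nz[OF assms] by auto
  then show "qD q (Einv q x) $ n = (fps_const x * qS q (Einv q x)) $ n"
    by (simp add: Einv_def qfact_Suc field_simps)
qed

lemma qD_qexp: assumes "q \<noteq> -1" shows "qD q (qexp_fps q c) = fps_const c * qexp_fps q c"
proof (rule fps_ext)
  fix n
  have "qint q (Suc n) \<noteq> 0" "qfact q n \<noteq> 0" using qint_nz[OF assms] qfact_nz[OF assms] by auto
  then show "qD q (qexp_fps q c) $ n = (fps_const c * qexp_fps q c) $ n"
    by (simp add: qexp_fps_def qfact_Suc field_simps)
qed

lemma qDD_HH: assumes "q \<noteq> -1"
  shows "qD q (qD q (HH q x s)) = fps_const (x^2) * HH q x s + fps_const (q*s) * qS q (HH q x s)"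
proof (rule fps_ext)
  fix n
  have nz: "qint q (Suc n) \<noteq> 0" "qint q (Suc (Suc n)) \<noteq> 0" "qfact q n \<noteq> 0"
    using qint_nz[OF assms] qfact_nz[OF assms] by auto
  show "qD q (qD q (HH q x s)) $ n = (fps_const (x^2) * HH q x s + fps_const (q*s) * qS q (HH q x s)) $ n"
  proof (cases "even n")
    case True
    then obtain j where j: "n = 2 * j" by blast
    have "PP q x s (Suc j) = (x ^ 2 + q ^ (2 * j + 1) * s) * PP q x s j"
      by (simp add: PP_def)
    moreover have "Suc (Suc n) div 2 = Suc j" using j by simp
    ultimately show ?thesis using True nz j
      by (simp add: HH_def qfact_Suc field_simps power_add power_mult)
  next
    case False
    then show ?thesis by (simp add: HH_def)
  qed
qed

lemma aux: fixes A1 B Z q x s H DH DDH SH SDH :: "'a::comm_ring_1"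
 assumes "A1 = B + Z*(q*x*B)" "DDH = x^2*H + q*s*SH" "Z*DH = H - SH" "Z*DDH = DH - SDH"
 shows "(DDH + x*DH + q*x*(DH + x*H))*B = x*((DH + x*H)*A1) + x*q*((SDH + x*SH)*B) + q*s*(SH*A1)"
proof -
  have z: "Z*(x^2*H+q*s*SH) = DH - SDH" using assms(2,4) by simp
  have "x*((DH + x*H)*A1) + x*q*((SDH + x*SH)*B) + q*s*(SH*A1) - (DDH + x*DH + q*x*(DH + x*H))*B
    = B*(x*q*(Z*(x^2*H+q*s*SH) - (DH - SDH)) + x^2*q*(Z*DH - (H - SH)))"
    unfolding assms(1,2) by (simp add: algebra_simps power2_eq_square)
  also have "\<dots> = 0" using z assms(3) by simp
  finally show ?thesis by simp
qed


lemma Y_eq: fixes q x s :: real assumes q: "q \<noteq> -1"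
  defines "Y \<equiv> HH q x s * Einv q x"
  shows "qD q (qD q Y) = fps_const x * qD q Y + fps_const (x*q) * qS q (qD q Y)
           + fps_const (q*s) * qS q Y"
proof -
  define H where "H = HH q x s"
  define E where "E = Einv q x"
  define B where "B = qS q (qS q E)"
  define Z :: "real fps" where "Z = fps_const (1 - q) * fps_X"
  have e1: "qD q E = fps_const x * qS q E" unfolding E_def by (rule qD_Einv[OF q])
  have dY: "qD q Y = (qD q H + fps_const x * H) * qS q E"
    unfolding Y_def H_def[symmetric] E_def[symmetric] qD_mult' e1 by (simp add: algebra_simps)
  have dSE: "qD q (qS q E) = fps_const q * fps_const x * B"
    unfolding qDS e1 qS_const B_def by (simp add: algebra_simps)
  have ddY: "qD q (qD q Y) = (qD q (qD q H) + fps_const x * qD q H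
        + fps_const q * fps_const x * (qD q H + fps_const x * H)) * B"
    unfolding dY qD_mult'[of q "qD q H + fps_const x * H" "qS q E"] dSE qD_add qD_const B_def by (simp add: algebra_simps)
  have s0: "Z * qD q (qS q E) = qS q E - B" unfolding Z_def B_def by (rule qD_X)
  have sig: "qS q E = B + Z * (fps_const q * fps_const x * B)"
    using s0 unfolding dSE by (metis add.commute diff_add_cancel)
  have z1: "Z * qD q H = H - qS q H" unfolding Z_def by (rule qD_X)
  have z2: "Z * qD q (qD q H) = qD q H - qS q (qD q H)" unfolding Z_def by (rule qD_X)
  have d2H: "qD q (qD q H) = fps_const x ^ 2 * H + fps_const q * fps_const s * qS q H"
    unfolding H_def qDD_HH[OF q] by (simp only: fps_const_mult fps_const_power)
  have sdY: "qS q (qD q Y) = (qS q (qD q H) + fps_const x * qS q H) * B"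
    unfolding dY qS_mult[of q "qD q H + fps_const x * H"] qS_add qS_const B_def ..
  have sY: "qS q Y = qS q H * qS q E" unfolding Y_def H_def[symmetric] E_def[symmetric] qS_mult ..
  show ?thesis
    unfolding ddY sdY sY unfolding dY fps_const_mult[symmetric]
    by (rule aux[OF sig d2H z1 z2])
qed

lemma T_Y: fixes q x s :: real assumes q: "q \<noteq> -1"
  shows "T n x s q = qfact q n * (HH q x s * Einv q x) $ n"
proof (induction n rule: less_induct)
  case (less n)
  define Y where "Y = HH q x s * Einv q x"
  show ?case
  proof (cases n)
    case 0 then show ?thesis by (simp add: HH_def Einv_def PP_def qfact_def)
  next
    case (Suc m)
    show ?thesis
    proof (cases m)
      case 0 then show ?thesis using Suc
        by (simp add: HH_def Einv_def PP_def qfact_def qint_def)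
    next
      case (Suc k)
      have e: "qD q (qD q Y) $ k = (fps_const x * qD q Y + fps_const (x*q) * qS q (qD q Y)
           + fps_const (q*s) * qS q Y) $ k" unfolding Y_def using Y_eq[OF q] by simp
      hence e': "qint q (Suc k) * (qint q (Suc (Suc k)) * Y $ Suc (Suc k)) =
          x * (qint q (Suc k) * Y $ Suc k) + x * q * (q ^ k * (qint q (Suc k) * Y $ Suc k))
           + q * s * (q ^ k * Y $ k)" by simp
      have IH1: "T (Suc k) x s q = qfact q (Suc k) * Y $ Suc k" using less[of "Suc k"] Suc \<open>n = Suc m\<close> Y_def by simp
      have IH0: "T k x s q = qfact q k * Y $ k" using less[of k] Suc \<open>n = Suc m\<close> Y_def by simp
      have "qfact q (Suc (Suc k)) * Y $ Suc (Suc k) = qfact q k * (qint q (Suc k) * (qint q (Suc (Suc k)) * Y $ Suc (Suc k)))"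
        by (simp add: qfact_Suc algebra_simps)
      also have "\<dots> = qfact q k * (x * (qint q (Suc k) * Y $ Suc k) + x * q * (q ^ k * (qint q (Suc k) * Y $ Suc k))
           + q * s * (q ^ k * Y $ k))" using e' by simp
      also have "\<dots> = (1 + q ^ Suc k) * x * T (Suc k) x s q + q ^ Suc k * s * T k x s q"
        unfolding IH1 IH0 by (simp add: qfact_Suc algebra_simps)
      finally show ?thesis using Suc \<open>n = Suc m\<close> Y_def by simp
    qed
  qed
qed



definition sc :: "real \<Rightarrow> real fps \<Rightarrow> real fps" where
  "sc c f = Abs_fps (\<lambda>n. c ^ n * f $ n)"
lemma sc_nth[simp]: "sc c f $ n = c ^ n * f $ n" by (simp add: sc_def)
lemma sc_mult: "sc c (f * g) = sc c f * sc c g"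
  by (rule fps_ext) (simp add: fps_mult_nth sum_distrib_left algebra_simps power_add[symmetric])
lemma sc_add: "sc c (f + g) = sc c f + sc c g" by (rule fps_ext) (simp add: algebra_simps)
lemma sc_diff: "sc c (f - g) = sc c f - sc c g" by (rule fps_ext) (simp add: algebra_simps)
lemma sc_qexp: "sc c (qexp_fps q d) = qexp_fps q (c * d)"
  by (rule fps_ext) (simp add: qexp_fps_def power_mult_distrib)
lemma sc_HH: "sc (-1) (HH q x s) = HH q x s"
  by (rule fps_ext) (simp add: HH_def)

lemma Einv_inv: assumes q: "q \<noteq> -1" shows "Einv q x * qexp_fps q (-x) = 1"
proof -
  define P where "P = Einv q x * qexp_fps q (-x)"
  have "qD q P = 0" unfolding P_def qD_mult qD_Einv[OF q] qD_qexp[OF q] fps_const_neg[symmetric]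
    by (simp add: algebra_simps del: fps_const_neg)
  have "P $ n = (if n = 0 then 1 else 0)" for n
  proof (cases n)
    case 0 then show ?thesis by (simp add: P_def Einv_def qexp_fps_def qfact_def)
  next
    case (Suc m)
    have "qint q (Suc m) * P $ Suc m = 0" using arg_cong[OF \<open>qD q P = 0\<close>, of "\<lambda>f. f $ m"] by simp
    then show ?thesis using Suc qint_nz[OF q, of "Suc m"] by simp
  qed
  then show ?thesis unfolding P_def[symmetric] by (intro fps_ext) simp
qed

lemma tan_rel: "qtan_fps q * (qexp_fps q 1 + qexp_fps q (-1)) = qexp_fps q 1 - qexp_fps q (-1)"
proof -
  have nz: "(qexp_fps q 1 + qexp_fps q (-1)) $ 0 \<noteq> 0" by (simp add: qexp_fps_def qfact_def)
  show ?thesis unfolding qtan_fps_def fps_divide_unit[OF nz]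
    using inverse_mult_eq_1[OF nz] by (simp add: mult.assoc)
qed

lemma main_fps: fixes q x s :: real assumes q: "q \<noteq> -1"
  defines "F \<equiv> Abs_fps (\<lambda>n. T n x s q / qfact q n)"
  shows "F - sc (-1) F = (F + sc (-1) F) * sc x (qtan_fps q)"
proof -
  define E where "E = qexp_fps q x"
  define E' where "E' = qexp_fps q (-x)"
  have FY: "F = HH q x s * Einv q x"
    unfolding F_def by (rule fps_ext) (simp add: T_Y[OF q] qfact_nz[OF q])
  have FE': "F * E' = HH q x s" unfolding FY E'_def using Einv_inv[OF q] by (simp add: mult.assoc)
  have "sc (-1) (F * E') = HH q x s" using FE' sc_HH by simp
  hence nFE: "sc (-1) F * E = HH q x s" unfolding sc_mult E'_def E_def sc_qexp by simp
  have key: "F * E' = sc (-1) F * E" using FE' nFE by simp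
  have t: "sc x (qtan_fps q) * (E + E') = E - E'"
    using arg_cong[OF tan_rel[of q], of "sc x"] unfolding sc_mult sc_add sc_diff sc_qexp E_def E'_def
    by simp
  have nz: "E + E' \<noteq> 0"
  proof
    assume "E + E' = 0"
    hence "(E + E') $ 0 = 0" by simp
    thus False by (simp add: E_def E'_def qexp_fps_def qfact_def)
  qed
  have "(F - sc (-1) F) * (E + E') = (F + sc (-1) F) * (E - E')"
    using key by (simp add: algebra_simps)
  also have "\<dots> = (F + sc (-1) F) * sc x (qtan_fps q) * (E + E')" using t by (simp add: mult.assoc)
  finally show ?thesis using nz by simp
qed

theorem theorem3p1:
  fixes q x s :: real and n :: nat
  assumes "q \<noteq> -1"
  shows "T (2*n+1) x s q =
    (\<Sum>k=0..n. qbinom q (2*n+1) (2*k) * (-1) ^ (n - k) * qtan q (2*n - 2*k + 1)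
                * x ^ (2*n + 1 - 2*k) * T (2*k) x s q)"
proof -
  note q = assms
  define F where "F = Abs_fps (\<lambda>n. T n x s q / qfact q n)"
  define \<tau> where "\<tau> = qtan_fps q"
  have Fn: "F $ i = T i x s q / qfact q i" for i by (simp add: F_def)
  have M: "F - sc (-1) F = (F + sc (-1) F) * sc x \<tau>"
    unfolding F_def \<tau>_def by (rule main_fps[OF q])
  define g where "g = (\<lambda>i. (F + sc (-1) F) $ i * sc x \<tau> $ (Suc (2*n) - i))"
  have "(F - sc (-1) F) $ Suc (2*n) = (\<Sum>i\<le>Suc (2*n). g i)"
    unfolding M fps_mult_nth g_def by (simp add: atLeast0AtMost)
  also have "\<dots> = (\<Sum>k\<le>n. g (2*k) + g (Suc (2*k)))" by (rule sum.in_pairs_0)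
  also have "\<dots> = (\<Sum>k\<le>n. 2 * (F $ (2*k) * (x ^ (2*n+1-2*k) * \<tau> $ (2*n+1-2*k))))"
    by (rule sum.cong) (auto simp: g_def)
  finally have e: "F $ (2*n+1) = (\<Sum>k\<le>n. F $ (2*k) * (x ^ (2*n+1-2*k) * \<tau> $ (2*n+1-2*k)))"
    by (simp add: sum_distrib_left[symmetric])
  have "T (2*n+1) x s q = qfact q (2*n+1) * F $ (2*n+1)" using qfact_nz[OF q] by (simp add: Fn)
  also have "\<dots> = (\<Sum>k\<le>n. qfact q (2*n+1) * (F $ (2*k) * (x ^ (2*n+1-2*k) * \<tau> $ (2*n+1-2*k))))"
    unfolding e sum_distrib_left ..
  also have "\<dots> = (\<Sum>k=0..n. qbinom q (2*n+1) (2*k) * (-1) ^ (n - k) * qtan q (2*n - 2*k + 1)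
                * x ^ (2*n + 1 - 2*k) * T (2*k) x s q)"
    unfolding atLeast0AtMost[symmetric]
  proof (rule sum.cong[OF refl])
    fix k assume "k \<in> {0..n}"
    then obtain m where m: "n = k + m" by (auto simp: le_iff_add)
    have a: "2*n+1-2*k = 2*m+1" "2*n - 2*k + 1 = 2*m+1" "(2*m+1-1) div 2 = m" using m by auto
    have sq: "((-1::real) ^ m) * (-1) ^ m = 1" by (simp add: power_mult_distrib[symmetric])
    show "qfact q (2*n+1) * (F $ (2*k) * (x ^ (2*n+1-2*k) * \<tau> $ (2*n+1-2*k))) =
      qbinom q (2*n+1) (2*k) * (-1) ^ (n - k) * qtan q (2*n - 2*k + 1)
                * x ^ (2*n + 1 - 2*k) * T (2*k) x s q"
      unfolding a qtan_def qbinom_def \<tau>_def[symmetric] Fn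
      using m qfact_nz[OF q] sq by (simp add: field_simps)
  qed
  finally show ?thesis .
qed

end
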